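(* Let $A,\xi_0>0$, $0<\alpha<\frac12$, and let $\{w_n\}_{n\ge0}$ be functions $w_n\colon(0,\xi_0]\to[0,1]$ with $w_{n+1}(\xi)\le w_n(\xi)$ for all $n,\xi$. If $w_{n+k}(\xi)\le4(1-A\xi^2)^kw_n(\xi)$ for all $\xi\in(0,\xi_0]$ and all integers $k,n\ge0$, then the sequence $$s_n=\sup\{w_n(\xi):\ n^{-\alpha}\le\xi\le\xi_0\}$$ decays rapidly in $n$.
   Context: A sequence $\{s_n\}$ decays rapidly in $n$ if for each $\ell\ge1$ there is $C$ with $|s_n|\le Cn^{-\ell}$ for all $n\ge1$ (a supremum over the empty set is taken to be $0$). *)

theory Defs
  imports Complex_Main
begin

definition decays_rapidly :: "(nat \<Rightarrow> real) \<Rightarrow> bool" where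
  "decays_rapidly s \<longleftrightarrow> (\<forall>l::nat. l \<ge> 1 \<longrightarrow> (\<exists>C::real. \<forall>n::nat. n \<ge> 1 \<longrightarrow> \<bar>s n\<bar> \<le> C * real n powr (- real l)))"

definition sup0 :: "(real \<Rightarrow> real) \<Rightarrow> real set \<Rightarrow> real" where
  "sup0 f S = (if S = {} then 0 else Sup (f ` S))"

end

theory Submission
  imports Defs
begin

lemma exp_ge_term:
  fixes x :: real assumes "x \<ge> 0"
  shows "x ^ m / fact m \<le> exp x"
proof -
  have s: "(\<lambda>n. x^n /\<^sub>R fact n) sums exp x" by (rule exp_converges)
  have "(\<Sum>i\<in>{m}. x^i /\<^sub>R fact i) \<le> (\<Sum>n. x^n /\<^sub>R fact n)"
    by (rule sum_le_suminf) (use s assms in \<open>auto simp: sums_iff\<close>)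
  then show ?thesis using s by (simp add: sums_iff divide_inverse mult.commute)
qed

lemma exp_decay:
  fixes A \<beta> :: real and l :: nat assumes "A > 0" "\<beta> > 0"
  shows "\<exists>C. \<forall>n::nat. n \<ge> 1 \<longrightarrow> exp (- A * real n powr \<beta>) \<le> C * real n powr (- real l)"
proof -
  define m where "m = nat \<lceil>real l / \<beta>\<rceil>"
  have mb: "real m * \<beta> \<ge> real l"
  proof -
    have "real m \<ge> real l / \<beta>" unfolding m_def by linarith
    then show ?thesis using assms by (simp add: field_simps)
  qed
  show ?thesis
  proof (intro exI allI impI)
    fix n :: nat assume n: "n \<ge> 1"
    have np: "real n > 0" using n by simp
    have x0: "A * real n powr \<beta> \<ge> 0" using assms by simp
    have "(A * real n powr \<beta>) ^ m / fact m \<le> exp (A * real n powr \<beta>)"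
      by (rule exp_ge_term[OF x0])
    moreover have "(A * real n powr \<beta>) ^ m = A ^ m * real n powr (real m * \<beta>)"
      using np by (simp add: power_mult_distrib powr_realpow[symmetric] powr_powr mult.commute)
    moreover have "real n powr (real m * \<beta>) \<ge> real n powr real l"
      using n mb by (intro powr_mono) auto
    ultimately have le: "A ^ m * real n powr real l / fact m \<le> exp (A * real n powr \<beta>)"
      using assms by (smt (verit) divide_right_mono fact_gt_zero mult_left_mono zero_le_power)
    have pos: "A ^ m * real n powr real l / fact m > 0" using assms np by simp
    have "exp (- A * real n powr \<beta>) = 1 / exp (A * real n powr \<beta>)"
      by (simp add: exp_minus field_simps)
    also have "\<dots> \<le> 1 / (A ^ m * real n powr real l / fact m)"
      proof (rule divide_left_mono[OF le])
      show "0 < exp (A * real n powr \<beta>) * (A ^ m * real n powr real l / fact m)"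
        using pos by (metis exp_gt_zero mult_pos_pos)
    qed simp
    also have "\<dots> = (fact m / A ^ m) * real n powr (- real l)"
      using np assms by (simp add: powr_minus field_simps)
    finally show "exp (- A * real n powr \<beta>) \<le> (fact m / A ^ m) * real n powr (- real l)" .
  qed
qed

theorem proposition7p4:
  fixes A \<xi>0 \<alpha> :: real and w :: "nat \<Rightarrow> real \<Rightarrow> real"
  assumes "A > 0" and "\<xi>0 > 0" and "0 < \<alpha>" and "\<alpha> < 1/2"
    and "\<And>n \<xi>. \<xi> \<in> {0<..\<xi>0} \<Longrightarrow> 0 \<le> w n \<xi> \<and> w n \<xi> \<le> 1"
    and "\<And>n \<xi>. \<xi> \<in> {0<..\<xi>0} \<Longrightarrow> w (Suc n) \<xi> \<le> w n \<xi>"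
    and "\<And>n k \<xi>. \<xi> \<in> {0<..\<xi>0} \<Longrightarrow> w (n + k) \<xi> \<le> 4 * (1 - A * \<xi>^2) ^ k * w n \<xi>"
  shows "decays_rapidly (\<lambda>n. sup0 (w n) {\<xi>. real n powr (- \<alpha>) \<le> \<xi> \<and> \<xi> \<le> \<xi>0})"
proof -
  define \<beta> where "\<beta> = 1 - 2 * \<alpha>"
  have bpos: "\<beta> > 0" using assms unfolding \<beta>_def by simp
  have pt: "w n \<xi> \<le> 4 * exp (- A * real n powr \<beta>)"
    if n: "n \<ge> 1" and xi: "real n powr (- \<alpha>) \<le> \<xi>" "\<xi> \<le> \<xi>0" for n \<xi>
  proof -
    have np: "real n > 0" using n by simp
    have xp: "\<xi> > 0" using xi(1) np by (smt (verit) powr_gt_zero)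
    hence xin: "\<xi> \<in> {0<..\<xi>0}" using xi by simp
    have w01: "0 \<le> w m \<xi>" "w m \<xi> \<le> 1" for m using assms(5)[OF xin] by auto
    show ?thesis
    proof (cases "1 - A * \<xi>^2 \<le> 0")
      case True
      obtain n' where n': "n = n' + 1" using n by (metis add.commute le_Suc_ex)
      have "w n \<xi> \<le> 4 * (1 - A * \<xi>^2) ^ 1 * w n' \<xi>" unfolding n' by (rule assms(7)[OF xin])
      also have "\<dots> \<le> 0" using True w01[of n'] by (simp add: mult_nonpos_nonneg)
      finally show ?thesis by (smt (verit) exp_gt_zero)
    next
      case False
      have "w n \<xi> \<le> 4 * (1 - A * \<xi>^2) ^ n * w 0 \<xi>" using assms(7)[OF xin, of 0 n] by simp
      also have "\<dots> \<le> 4 * (1 - A * \<xi>^2) ^ n"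
        using False w01[of 0] by (simp add: mult_left_le)
      also have "(1 - A * \<xi>^2) ^ n \<le> exp (- A * \<xi>^2) ^ n"
      proof (rule power_mono)
        show "1 - A * \<xi>^2 \<le> exp (- A * \<xi>^2)" using exp_ge_add_one_self[of "- A * \<xi>^2"] by simp
      qed (use False in simp)
      also have "exp (- A * \<xi>^2) ^ n = exp (- A * (real n * \<xi>^2))"
        by (simp add: exp_of_nat_mult[symmetric] mult_ac)
      also have "\<dots> \<le> exp (- A * real n powr \<beta>)"
      proof -
        have "(real n powr (- \<alpha>))^2 \<le> \<xi>^2"
          using xi(1) by (intro power_mono) auto
        hence "real n powr (-2*\<alpha>) \<le> \<xi>^2"
          using np by (simp add: powr_realpow[symmetric] powr_powr mult.commute)
        hence "real n * real n powr (-2*\<alpha>) \<le> real n * \<xi>^2" using np by simp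
        moreover have "real n * real n powr (-2*\<alpha>) = real n powr \<beta>"
          using np by (simp add: \<beta>_def powr_diff powr_minus field_simps powr_add)
        ultimately show ?thesis using assms(1) by simp
      qed
      finally show ?thesis by simp
    qed
  qed
  show ?thesis unfolding decays_rapidly_def
  proof (intro allI impI)
    fix l :: nat assume "l \<ge> 1"
    obtain C where C: "\<And>n::nat. n \<ge> 1 \<Longrightarrow> exp (- A * real n powr \<beta>) \<le> C * real n powr (- real l)"
      using exp_decay[OF assms(1) bpos, of l] by blast
    show "\<exists>C. \<forall>n. 1 \<le> n \<longrightarrow> \<bar>sup0 (w n) {\<xi>. real n powr - \<alpha> \<le> \<xi> \<and> \<xi> \<le> \<xi>0}\<bar> \<le> C * real n powr - real l"
    proof (intro exI[of _ "4*C"] allI impI)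
      fix n :: nat assume n: "1 \<le> n"
      define S where "S = {\<xi>. real n powr - \<alpha> \<le> \<xi> \<and> \<xi> \<le> \<xi>0}"
      have np: "real n > 0" using n by simp
      have Sin: "\<xi> \<in> {0<..\<xi>0}" if "\<xi> \<in> S" for \<xi>
        proof -
        have h: "0 < real n powr - \<alpha>" using np by simp
        have hh: "real n powr - \<alpha> \<le> \<xi>" "\<xi> \<le> \<xi>0" using that unfolding S_def by auto
        have "\<xi> > 0" using h hh(1) by linarith
        then show ?thesis using hh(2) by simp
      qed
      have "\<bar>sup0 (w n) S\<bar> \<le> 4 * exp (- A * real n powr \<beta>)"
      proof (cases "S = {}")
        case True then show ?thesis by (simp add: sup0_def)
      next
        case False
        then obtain x where x: "x \<in> S" by blast
        have bdd: "bdd_above (w n ` S)"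
          using assms(5) Sin by (intro bdd_aboveI[of _ 1]) auto
        have "0 \<le> w n x" using assms(5)[OF Sin[OF x]] by simp
        also have "w n x \<le> Sup (w n ` S)" using bdd x by (intro cSup_upper) auto
        finally have ge: "0 \<le> Sup (w n ` S)" .
        have "Sup (w n ` S) \<le> 4 * exp (- A * real n powr \<beta>)"
          using False pt n unfolding S_def by (intro cSup_least) auto
        then show ?thesis using ge False by (simp add: sup0_def)
      qed
      also have "\<dots> \<le> 4 * C * real n powr - real l" using C[OF n] by simp
      finally show "\<bar>sup0 (w n) {\<xi>. real n powr - \<alpha> \<le> \<xi> \<and> \<xi> \<le> \<xi>0}\<bar> \<le> 4 * C * real n powr - real l"
        unfolding S_def .
    qed
  qed
qed

end
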